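(* Let $X,Y\in\Sigma^*$ and let $\mathcal{A},\mathcal{A}'$ be alignments of $X$ onto $Y$. If $\mathcal{A}$ and $\mathcal{A}'$, viewed as paths in the alignment graph of $X$ and $Y$, do not contain any common diagonal edge, then $\mathrm{selfed}(X)\le\mathrm{ed}_{\mathcal{A}}(X,Y)+\mathrm{ed}_{\mathcal{A}'}(X,Y)$.
   Context: An alignment of $X$ onto $Y$ is a sequence $(x_t,y_t)_{t=0}^m$ from $(0,0)$ to $(|X|,|Y|)$ with steps $(1,0)$, $(0,1)$ or $(1,1)$; viewed as a path in the grid graph on $[0,|X|]\times[0,|Y|]$, a step $(x,y)\to(x+1,y+1)$ is a diagonal edge. $\mathrm{ed}_{\mathcal{A}}(X,Y)$ is the unweighted cost of $\mathcal{A}$: the number of steps $(1,0)$, $(0,1)$, and diagonal steps $(x,y)\to(x+1,y+1)$ with $X[x]\ne Y[y]$. A self-alignment of $X$ is an alignment of $X$ onto $X$ containing no edge $(x,x)\to(x+1,x+1)$; $\mathrm{selfed}(X)$ is the minimum unweighted cost of a self-alignment. *)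

theory Defs
  imports Main
begin

(* An alignment is represented as the list of its grid points [(x_0,y_0),...,(x_m,y_m)]. *)

definition is_step :: "nat \<times> nat \<Rightarrow> nat \<times> nat \<Rightarrow> bool" where
  "is_step p q \<longleftrightarrow> q = (fst p + 1, snd p) \<or> q = (fst p, snd p + 1) \<or> q = (fst p + 1, snd p + 1)"

definition is_alignment :: "'a list \<Rightarrow> 'a list \<Rightarrow> (nat \<times> nat) list \<Rightarrow> bool" where
  "is_alignment X Y A \<longleftrightarrow> A \<noteq> [] \<and> hd A = (0, 0) \<and> last A = (length X, length Y) \<and>
     (\<forall>t. Suc t < length A \<longrightarrow> is_step (A ! t) (A ! Suc t))"

definition edges :: "(nat \<times> nat) list \<Rightarrow> ((nat \<times> nat) \<times> (nat \<times> nat)) set" where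
  "edges A = {(A ! t, A ! Suc t) | t. Suc t < length A}"

definition diag_edges :: "(nat \<times> nat) list \<Rightarrow> ((nat \<times> nat) \<times> (nat \<times> nat)) set" where
  "diag_edges A = {(p, q) \<in> edges A. q = (fst p + 1, snd p + 1)}"

definition step_cost :: "'a list \<Rightarrow> 'a list \<Rightarrow> nat \<times> nat \<Rightarrow> nat \<times> nat \<Rightarrow> nat" where
  "step_cost X Y p q =
     (if q = (fst p + 1, snd p + 1) then (if X ! fst p \<noteq> Y ! snd p then 1 else 0) else 1)"

definition ed_al :: "(nat \<times> nat) list \<Rightarrow> 'a list \<Rightarrow> 'a list \<Rightarrow> nat" where
  "ed_al A X Y = (\<Sum>t<length A - 1. step_cost X Y (A ! t) (A ! Suc t))"

definition is_self_alignment :: "'a list \<Rightarrow> (nat \<times> nat) list \<Rightarrow> bool" where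
  "is_self_alignment X A \<longleftrightarrow> is_alignment X X A \<and>
     (\<forall>x. ((x, x), (x + 1, x + 1)) \<notin> edges A)"

definition selfed :: "'a list \<Rightarrow> nat" where
  "selfed X = (LEAST c. \<exists>A. is_self_alignment X A \<and> ed_al A X X = c)"

end

theory Submission
  imports Defs
begin

fun ok :: "(nat \<times> nat) list \<Rightarrow> bool" where
  "ok [] = True"
| "ok [p] = True"
| "ok (p # q # r) = (is_step p q \<and> ok (q # r))"

fun cst :: "'a list \<Rightarrow> 'a list \<Rightarrow> (nat \<times> nat) list \<Rightarrow> nat" where
  "cst X Y [] = 0"
| "cst X Y [p] = 0"
| "cst X Y (p # q # r) = step_cost X Y p q + cst X Y (q # r)"

fun eg :: "(nat \<times> nat) list \<Rightarrow> ((nat \<times> nat) \<times> (nat \<times> nat)) set" where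
  "eg [] = {}"
| "eg [p] = {}"
| "eg (p # q # r) = insert (p, q) (eg (q # r))"

fun dg :: "(nat \<times> nat) list \<Rightarrow> ((nat \<times> nat) \<times> (nat \<times> nat)) set" where
  "dg [] = {}"
| "dg [p] = {}"
| "dg (p # q # r) = (if q = (fst p + 1, snd p + 1) then {(p, q)} else {}) \<union> dg (q # r)"

lemma ok_idx: "ok A \<longleftrightarrow> (\<forall>t. Suc t < length A \<longrightarrow> is_step (A ! t) (A ! Suc t))"
proof (induction A rule: ok.induct)
  case (3 p q r)
  show ?case
  proof
    assume "ok (p # q # r)"
    then show "\<forall>t. Suc t < length (p # q # r) \<longrightarrow> is_step ((p # q # r) ! t) ((p # q # r) ! Suc t)"
      using 3 by (auto simp: less_Suc_eq_0_disj)
  next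
    assume h: "\<forall>t. Suc t < length (p # q # r) \<longrightarrow> is_step ((p # q # r) ! t) ((p # q # r) ! Suc t)"
    have "is_step p q" using h[rule_format, of 0] by simp
    moreover have "ok (q # r)" using 3 h by (metis Suc_less_eq length_Cons nth_Cons_Suc)
    ultimately show "ok (p # q # r)" by simp
  qed
qed auto

lemma eg_idx: "edges A = eg A"
proof (induction A rule: eg.induct)
  case (3 p q r)
  have "edges (p # q # r) = insert (p, q) (edges (q # r))"
    unfolding edges_def
    apply (rule set_eqI)
    apply (simp only: mem_Collect_eq insert_iff)
    apply (rule iffI)
     apply (metis (no_types, lifting) Suc_less_eq length_Cons nth_Cons_0 nth_Cons_Suc not0_implies_Suc)
    apply (elim disjE exE conjE)
     apply (rule exI[of _ 0], simp)
    apply (metis Suc_less_eq length_Cons nth_Cons_Suc)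
    done
  then show ?case using 3 by simp
qed (auto simp: edges_def)

lemma dg_idx: "diag_edges A = dg A"
proof (induction A rule: dg.induct)
  case (3 p q r)
  have "edges (p # q # r) = insert (p, q) (edges (q # r))" using eg_idx by simp
  then have "diag_edges (p # q # r) = (if q = (fst p + 1, snd p + 1) then {(p, q)} else {}) \<union> diag_edges (q # r)"
    unfolding diag_edges_def by (rule_tac set_eqI) (auto split: prod.splits)
  then show ?case using 3 by simp
qed (auto simp: diag_edges_def eg_idx)

lemma cst_idx: "ed_al A X Y = cst X Y A"
proof (induction A rule: cst.induct)
  case (3 X Y p q r)
  have "ed_al (p # q # r) X Y = step_cost X Y p q + ed_al (q # r) X Y"
    unfolding ed_al_def by (simp add: sum.lessThan_Suc_shift del: sum.lessThan_Suc)
  then show ?case using 3 by simp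
qed (auto simp: ed_al_def)

lemma ok_mono: "ok P \<Longrightarrow> P \<noteq> [] \<Longrightarrow> snd (hd P) \<le> snd (last P)"
  by (induction P rule: ok.induct) (auto simp: is_step_def)

lemma dg_sub: "dg (q # r) \<subseteq> dg (p # q # r)" by auto

lemma main:
  fixes X Y :: "'a list"
  shows "\<And>P P'. length P + length P' = n \<Longrightarrow> ok P \<Longrightarrow> ok P' \<Longrightarrow> P \<noteq> [] \<Longrightarrow> P' \<noteq> [] \<Longrightarrow>
    snd (hd P) = snd (hd P') \<Longrightarrow> snd (last P) = snd (last P') \<Longrightarrow> dg P \<inter> dg P' = {} \<Longrightarrow>
    \<exists>Q. ok Q \<and> Q \<noteq> [] \<and> hd Q = (fst (hd P), fst (hd P')) \<and> last Q = (fst (last P), fst (last P'))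
      \<and> (\<forall>x. ((x, x), (x + 1, x + 1)) \<notin> eg Q) \<and> cst X X Q \<le> cst X Y P + cst X Y P'"
proof (induction n rule: less_induct)
  case (less n P P')
  note IH = less.IH[OF _ refl]
  show ?case
  proof (cases "\<exists>p q r. P = p # q # r \<and> q = (fst p + 1, snd p)")
    case True
    then obtain p q r where P: "P = p # q # r" and q: "q = (fst p + 1, snd p)" by blast
    obtain Q where Q: "ok Q" "Q \<noteq> []" "hd Q = (fst q, fst (hd P'))" "last Q = (fst (last P), fst (last P'))"
      "\<forall>x. ((x, x), (x + 1, x + 1)) \<notin> eg Q" "cst X X Q \<le> cst X Y (q # r) + cst X Y P'"
      using IH[of "q # r" P'] less.prems P q dg_sub[of q r p] by auto
    obtain a b where ab: "Q = a # b" using Q(2) by (cases Q) auto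
    show ?thesis
      apply (rule exI[of _ "(fst p, fst (hd P')) # Q"])
      using Q ab P q by (auto simp: is_step_def step_cost_def)
  next
    case F1: False
    show ?thesis
    proof (cases "\<exists>p q r. P' = p # q # r \<and> q = (fst p + 1, snd p)")
      case True
      then obtain p q r where P: "P' = p # q # r" and q: "q = (fst p + 1, snd p)" by blast
      obtain Q where Q: "ok Q" "Q \<noteq> []" "hd Q = (fst (hd P), fst q)" "last Q = (fst (last P), fst (last P'))"
        "\<forall>x. ((x, x), (x + 1, x + 1)) \<notin> eg Q" "cst X X Q \<le> cst X Y P + cst X Y (q # r)"
        using IH[of P "q # r"] less.prems P q dg_sub[of q r p] by auto
      obtain a b where ab: "Q = a # b" using Q(2) by (cases Q) auto
      show ?thesis
        apply (rule exI[of _ "(fst (hd P), fst p) # Q"])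
        using Q ab P q by (auto simp: is_step_def step_cost_def)
    next
      case F2: False
      show ?thesis
      proof (cases "\<exists>p. P = [p]")
        case True
        then obtain p where P: "P = [p]" by blast
        show ?thesis
        proof (cases "\<exists>p'. P' = [p']")
          case True
          then obtain p' where P': "P' = [p']" by blast
          show ?thesis using P P' less.prems by (intro exI[of _ "[(fst p, fst p')]"]) auto
        next
          case False
          then obtain p' q' r' where P': "P' = p' # q' # r'" using less.prems
            by (metis list.exhaust)
          have "snd q' = snd p' + 1" using F2 P' less.prems by (auto simp: is_step_def)
          moreover have "snd q' \<le> snd (last P')" using ok_mono[of "q' # r'"] P' less.prems by auto
          ultimately show ?thesis using less.prems P P' by simp
        qed
      next
        case False
        then obtain p q r where P: "P = p # q # r" using less.prems
          by (metis list.exhaust)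
        have sq: "snd q = snd p + 1" using F1 P less.prems by (auto simp: is_step_def)
        have sqq: "snd q \<le> snd (last P)" using ok_mono[of "q # r"] P less.prems by auto
        obtain p' q' r' where P': "P' = p' # q' # r'"
        proof (cases P')
          case (Cons p' t)
          then show ?thesis using that sq sqq less.prems P
            by (cases t) auto
        qed (use less.prems in auto)
        have sq': "snd q' = snd p' + 1" using F2 P' less.prems by (auto simp: is_step_def)
        have ys: "snd p = snd p'" using less.prems P P' by simp
        have stq: "is_step p q" "is_step p' q'" using less.prems P P' by auto
        have okt: "ok (q # r)" "ok (q' # r')" using less.prems P P' by auto
        have dgd: "dg (q # r) \<inter> dg (q' # r') = {}" using less.prems P P' dg_sub[of q r p] dg_sub[of q' r' p'] by blast
        obtain Q where Q: "ok Q" "Q \<noteq> []" "hd Q = (fst q, fst q')" "last Q = (fst (last P), fst (last P'))"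
          "\<forall>x. ((x, x), (x + 1, x + 1)) \<notin> eg Q" "cst X X Q \<le> cst X Y (q # r) + cst X Y (q' # r')"
          using IH[of "q # r" "q' # r'"] less.prems P P' sq sq' ys okt dgd by auto
        obtain a b where ab: "Q = a # b" using Q(2) by (cases Q) auto
        have cq: "step_cost X Y p q \<le> 1" "step_cost X Y p' q' \<le> 1" by (auto simp: step_cost_def)
        consider (VV) "q = (fst p, snd p + 1)" "q' = (fst p', snd p' + 1)"
          | (VD) "q = (fst p, snd p + 1)" "q' = (fst p' + 1, snd p' + 1)"
          | (DV) "q = (fst p + 1, snd p + 1)" "q' = (fst p', snd p' + 1)"
          | (DD) "q = (fst p + 1, snd p + 1)" "q' = (fst p' + 1, snd p' + 1)"
          using stq sq sq' unfolding is_step_def by auto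
        then show ?thesis
        proof cases
          case VV
          have "step_cost X Y p q = 1" "step_cost X Y p' q' = 1" using VV by (auto simp: step_cost_def)
          then show ?thesis using Q P P' VV by (intro exI[of _ Q]) auto
        next
          case VD
          have "step_cost X Y p q = 1" using VD by (auto simp: step_cost_def)
          then show ?thesis using Q P P' VD ab
            by (intro exI[of _ "(fst p, fst p') # Q"]) (auto simp: is_step_def step_cost_def)
        next
          case DV
          have "step_cost X Y p' q' = 1" using DV by (auto simp: step_cost_def)
          then show ?thesis using Q P P' DV ab
            by (intro exI[of _ "(fst p, fst p') # Q"]) (auto simp: is_step_def step_cost_def)
        next
          case DD
          have ne: "fst p \<noteq> fst p'"
          proof
            assume e: "fst p = fst p'"
            have "p = p'" using e ys by (simp add: prod_eq_iff)
            moreover have "q = q'" using DD e ys by simp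
            ultimately have "(p, q) \<in> dg P \<inter> dg P'" using P P' DD by auto
            then show False using less.prems by blast
          qed
          have sc: "step_cost X X (fst p, fst p') (fst p + 1, fst p' + 1) \<le> step_cost X Y p q + step_cost X Y p' q'"
            using DD ys by (auto simp: step_cost_def)
          show ?thesis using Q P P' DD ab ne sc
            by (intro exI[of _ "(fst p, fst p') # Q"]) (auto simp: is_step_def)
        qed
      qed
    qed
  qed
qed

theorem lemma4p3:
  fixes X Y :: "'a list" and A A' :: "(nat \<times> nat) list"
  assumes "is_alignment X Y A" and "is_alignment X Y A'"
    and "diag_edges A \<inter> diag_edges A' = {}"
  shows "selfed X \<le> ed_al A X Y + ed_al A' X Y"
proof -
  have a: "ok A" "A \<noteq> []" "hd A = (0,0)" "last A = (length X, length Y)"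
    using assms(1) unfolding is_alignment_def ok_idx by auto
  have a': "ok A'" "A' \<noteq> []" "hd A' = (0,0)" "last A' = (length X, length Y)"
    using assms(2) unfolding is_alignment_def ok_idx by auto
  obtain Q where Q: "ok Q" "Q \<noteq> []" "hd Q = (0, 0)" "last Q = (length X, length X)"
      "\<forall>x. ((x, x), (x + 1, x + 1)) \<notin> eg Q" "cst X X Q \<le> cst X Y A + cst X Y A'"
    using main[where X=X and Y=Y, OF refl a(1) a'(1) a(2) a'(2)] a a' assms(3) unfolding dg_idx by auto
  have "is_self_alignment X Q"
    unfolding is_self_alignment_def is_alignment_def eg_idx using Q ok_idx by auto
  then have "selfed X \<le> ed_al Q X X"
    unfolding selfed_def by (intro Least_le) blast
  then show ?thesis using Q(6) by (simp add: cst_idx)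
qed

end
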